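(* Let $p\ge3$ be a prime and let $c>0$. Let $D$ be a probability distribution on $\mathbb{F}_p$ with $D(x)\le1-c$ for every $x\in\mathbb{F}_p$. Then for every positive integer $M\ge 2p^2\log p/(c\pi^2)$, the distribution $MD$ satisfies $|MD(x)-p^{-1}|\le p^{-2}$ for each $x\in\mathbb{F}_p$.
   Context: For a probability distribution $D$ on $\mathbb{F}_p$ and a positive integer $M$, $MD$ denotes the $M$-fold convolution $D+\dots+D$, i.e. the distribution of the sum of $M$ independent random variables each with distribution $D$. *)

theory Defs
  imports "HOL-Probability.Probability_Mass_Function"
begin

text \<open>F_p is modelled as the residues {0..<p} (type nat); a distribution on F_p is a
 nat pmf whose support lies in {..<p}.\<close>

definition conv_mod :: "nat \<Rightarrow> nat pmf \<Rightarrow> nat pmf \<Rightarrow> nat pmf" where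
  "conv_mod p A B = map_pmf (\<lambda>(a, b). (a + b) mod p) (pair_pmf A B)"

text \<open>M-fold convolution M D (only meaningful for M \<ge> 1).\<close>
fun mfold_conv :: "nat \<Rightarrow> nat \<Rightarrow> nat pmf \<Rightarrow> nat pmf" where
  "mfold_conv p 0 D = return_pmf 0"
| "mfold_conv p (Suc 0) D = D"
| "mfold_conv p (Suc (Suc m)) D = conv_mod p D (mfold_conv p (Suc m) D)"

end

theory Submission imports Defs "HOL-Computational_Algebra.Primes" "HOL-Analysis.Complex_Transcendental" begin

lemma cos_lb: fixes x :: real assumes "x \<ge> 0" shows "1 - x^2/2 \<le> cos x"
proof -
  have "(\<lambda>t. cos t - 1 + t^2/2) 0 \<le> (\<lambda>t. cos t - 1 + t^2/2) x"
  proof (rule DERIV_nonneg_imp_nondecreasing[OF assms])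
    fix t :: real assume "0 \<le> t" "t \<le> x"
    show "\<exists>y. ((\<lambda>t. cos t - 1 + t^2/2) has_real_derivative y) (at t) \<and> y \<ge> 0"
      by (rule exI[of _ "- sin t + t"]) (auto intro!: derivative_eq_intros simp: sin_x_le_x \<open>0 \<le> t\<close>)
  qed
  then show ?thesis by simp
qed

lemma sin_lb: fixes x :: real assumes "x \<ge> 0" shows "x - x^3/6 \<le> sin x"
proof -
  have "(\<lambda>t. sin t - t + t^3/6) 0 \<le> (\<lambda>t. sin t - t + t^3/6) x"
  proof (rule DERIV_nonneg_imp_nondecreasing[OF assms])
    fix t :: real assume "0 \<le> t" "t \<le> x"
    show "\<exists>y. ((\<lambda>t. sin t - t + t^3/6) has_real_derivative y) (at t) \<and> y \<ge> 0"
      by (rule exI[of _ "cos t - 1 + t^2/2"]) (use cos_lb[of t] \<open>0 \<le> t\<close> in \<open>auto intro!: derivative_eq_intros\<close>)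
  qed
  then show ?thesis by simp
qed

lemma exp_ub2: fixes x :: real assumes "x \<ge> 0" shows "exp (-x) \<le> 1 - x + x^2/2"
proof -
  have "(\<lambda>t. 1 - t + t^2/2 - exp (-t)) 0 \<le> (\<lambda>t. 1 - t + t^2/2 - exp (-t)) x"
  proof (rule DERIV_nonneg_imp_nondecreasing[OF assms])
    fix t :: real assume "0 \<le> t" "t \<le> x"
    show "\<exists>y. ((\<lambda>t. 1 - t + t^2/2 - exp (-t)) has_real_derivative y) (at t) \<and> y \<ge> 0"
      by (rule exI[of _ "-1 + t + exp (-t)"]) (use exp_minus_ge[of t] in \<open>auto intro!: derivative_eq_intros\<close>)
  qed
  then show ?thesis by simp
qed

lemma exp_lb3: fixes x :: real assumes "x \<ge> 0" shows "1 - x + x^2/2 - x^3/6 \<le> exp (-x)"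
proof -
  have "(\<lambda>t. exp (-t) - (1 - t + t^2/2 - t^3/6)) 0 \<le> (\<lambda>t. exp (-t) - (1 - t + t^2/2 - t^3/6)) x"
  proof (rule DERIV_nonneg_imp_nondecreasing[OF assms])
    fix t :: real assume "0 \<le> t" "t \<le> x"
    show "\<exists>y. ((\<lambda>t. exp (-t) - (1 - t + t^2/2 - t^3/6)) has_real_derivative y) (at t) \<and> y \<ge> 0"
      by (rule exI[of _ "- exp (-t) + 1 - t + t^2/2"]) (use exp_ub2[of t] \<open>0 \<le> t\<close> in \<open>auto intro!: derivative_eq_intros\<close>)
  qed
  then show ?thesis by simp
qed

lemma key_ineq:
  fixes u c m P :: real
  assumes u: "0 < u" "u^2 \<le> 11/10" and c: "0 < c" and m: "0 \<le> m" "m \<le> 1 - c"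
    and P1: "P \<ge> 1 - m" and P2: "P \<ge> 2*m*(1-m)"
  shows "1 - 2 * sin u ^ 2 * P \<le> exp (-2*c*u^2)"
proof -
  define s where "s = sin u"
  define y where "y = u^2"
  have y0: "y > 0" "y \<le> 11/10" using u by (auto simp: y_def)
  have sl: "u - u^3/6 \<le> s" using sin_lb[of u] u by (simp add: s_def)
  have "u - u^3/6 = u * (1 - y/6)" by (simp add: y_def power3_eq_cube power2_eq_square algebra_simps)
  moreover have "1 - y/6 > 0" using y0 by simp
  ultimately have pos: "u - u^3/6 \<ge> 0" using u by simp
  have w: "s^2 \<ge> y * (1 - y/6)^2"
  proof -
    have "(u - u^3/6)^2 \<le> s^2" using sl pos by (intro power_mono) auto
    moreover have "(u - u^3/6)^2 = y * (1 - y/6)^2"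
      by (simp add: y_def power2_eq_square power3_eq_cube algebra_simps)
    ultimately show ?thesis by simp
  qed
  have A: "s^2 \<ge> y - y^2/2 + y^3/6"
  proof -
    have "y * (1 - y/6)^2 - (y - y^2/2 + y^3/6) = y^2 * (6 - 5*y) / 36"
      by (simp add: power2_eq_square power3_eq_cube algebra_simps)
    moreover have "y^2 * (6 - 5*y) / 36 \<ge> 0" using y0 by simp
    ultimately show ?thesis using w by linarith
  qed
  have B: "2 * s^2 \<ge> y"
  proof -
    have "(1 - y/6)^2 \<ge> 1/2"
    proof -
      have "1 - y/6 \<ge> 4/5" using y0 by simp
      hence "(1 - y/6)^2 \<ge> (4/5)^2" by (intro power_mono) auto
      thus ?thesis by (simp add: power2_eq_square)
    qed
    hence "y * (1 - y/6)^2 \<ge> y * (1/2)" using y0 by (intro mult_left_mono) auto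
    thus ?thesis using w by linarith
  qed
  have C: "1 - exp (-y) \<le> s^2" using exp_lb3[of y] y0 A by linarith
  have D: "s^2 \<ge> y * exp (-y)"
  proof -
    have "exp (-y) \<le> 1 - y + y^2/2" by (rule exp_ub2) (use y0 in linarith)
    hence "y * exp (-y) \<le> y * (1 - y + y^2/2)" using y0 by (intro mult_left_mono) auto
    moreover have "y * (1 - y + y^2/2) \<le> y * (1 - y/6)^2"
    proof -
      have "y * (1 - y/6)^2 - y * (1 - y + y^2/2) = y^2 * (24 - 17*y) / 36"
        by (simp add: power2_eq_square power3_eq_cube algebra_simps)
      moreover have "y^2 * (24 - 17*y) / 36 \<ge> 0" using y0 by simp
      ultimately show ?thesis by linarith
    qed
    ultimately show ?thesis using w by linarith
  qed
  show ?thesis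
  proof (cases "m < 1/2")
    case True
    have cP: "c \<le> P" and P12: "2*P - 1 \<ge> 0" using True P1 m by auto
    have "exp (-2*c*y) \<ge> exp (-2*P*y)" using cP y0 by simp
    moreover have "exp (-2*P*y) = exp (-y) * exp (-((2*P-1)*y))"
      by (simp add: exp_add[symmetric] algebra_simps)
    moreover have "exp (-((2*P-1)*y)) \<ge> 1 - (2*P-1)*y" using exp_minus_ge by blast
    ultimately have e: "exp (-2*c*y) \<ge> exp (-y) * (1 - (2*P-1)*y)"
      by (smt (verit) exp_gt_zero mult_left_mono)
    have "(2*P-1) * (s^2 - y * exp (-y)) \<ge> 0" using P12 D by simp
    hence "1 - 2 * s^2 * P \<le> exp (-y) * (1 - (2*P-1)*y)" using C
      by (simp add: algebra_simps)
    with e show ?thesis by (simp add: s_def y_def)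
  next
    case False
    have c2: "c \<le> 1/2" using False m by simp
    have "m*(1-m) - c*(1-c) = (m - c) * (1 - m - c)" by (simp add: algebra_simps)
    moreover have "(m - c) * (1 - m - c) \<ge> 0" using False m c2 by simp
    ultimately have Pc: "P \<ge> 2*c*(1-c)" using P2 by linarith
    define z where "z = 2*c*y"
    have z0: "z \<ge> 0" using c y0 by (simp add: z_def)
    have ez: "exp (-z) \<ge> 1 - z + z^2/2 - z^3/6" using exp_lb3[OF z0] .
    have "z - z^2/2 + z^3/6 = c * (2*y - 2*c*y^2 + 4/3*c^2*y^3)"
      by (simp add: z_def power2_eq_square power3_eq_cube algebra_simps)
    also have "\<dots> \<le> c * (2*y - 2*c*y^2 + 2/3*c*y^3)"
    proof -
      have "c^2 * y^3 \<le> (c/2) * y^3" using c c2 y0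
        by (intro mult_right_mono) (auto simp: power2_eq_square)
      thus ?thesis using c by (intro mult_left_mono) auto
    qed
    also have "\<dots> \<le> c * (4 * s^2 * (1 - c))"
    proof -
      define K where "K = 4 * s^2 - 2*y^2 + 2/3*y^3"
      have "c * K \<le> 4 * s^2 - 2*y"
      proof (cases "K \<le> 0")
        case True
        then show ?thesis using c B by (smt (verit) mult_nonneg_nonpos)
      next
        case False
        hence "c * K \<le> (1/2) * K" using c2 by (intro mult_right_mono) auto
        thus ?thesis using A by (simp add: K_def)
      qed
      hence "2*y - 2*c*y^2 + 2/3*c*y^3 \<le> 4 * s^2 * (1 - c)" by (simp add: K_def algebra_simps)
      thus ?thesis using c by (intro mult_left_mono) auto
    qed
    also have "\<dots> \<le> 2 * s^2 * P"
    proof -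
      have "2 * s^2 * (2*c*(1-c)) \<le> 2 * s^2 * P" using Pc by (intro mult_left_mono) auto
      thus ?thesis by (simp add: algebra_simps)
    qed
    finally show ?thesis using ez by (simp add: z_def s_def y_def mult.assoc)
  qed
qed



definition om :: "nat \<Rightarrow> complex" where "om p = cis (2 * pi / real p)"

definition ft :: "nat \<Rightarrow> nat pmf \<Rightarrow> nat \<Rightarrow> complex" where
  "ft p P k = (\<Sum>x<p. complex_of_real (pmf P x) * om p ^ (k * x))"

lemma om_pow_p: "p > 0 \<Longrightarrow> om p ^ p = 1"
  unfolding om_def Complex.DeMoivre by simp

lemma om_pow_mod: assumes "p > 0" shows "om p ^ n = om p ^ (n mod p)"
proof -
  have "om p ^ n = om p ^ (p * (n div p) + n mod p)" by simp
  also have "\<dots> = (om p ^ p) ^ (n div p) * om p ^ (n mod p)" by (simp only: power_add power_mult)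
  finally show ?thesis using om_pow_p[OF assms] by simp
qed

lemma om_pow: "om p ^ n = cis (2 * pi * real n / real p)"
  unfolding om_def Complex.DeMoivre by (simp add: field_simps)

lemma norm_om_pow [simp]: "norm (om p ^ n) = 1"
  by (simp add: om_pow)

lemma norm_om [simp]: "norm (om p) = 1"
  by (simp add: om_def)

lemma om_pow_ne1: assumes "p > 0" "\<not> p dvd n" shows "om p ^ n \<noteq> 1"
proof
  assume "om p ^ n = 1"
  hence "cos (2 * pi * real n / real p) = 1" by (simp add: om_pow complex_eq_iff)
  then obtain j :: int where j: "2 * pi * real n / real p = j * 2 * pi" by (auto simp: cos_one_2pi_int)
  hence "real n = real p * j" using assms by (simp add: field_simps)
  hence "int n = int p * j" by (metis of_int_eq_iff of_int_mult of_int_of_nat_eq)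
  hence "int p dvd int n" by simp
  with assms show False by simp
qed

lemma geo_om: assumes "p > 0" shows "(\<Sum>k<p. om p ^ (k * n)) = (if p dvd n then of_nat p else 0)"
proof (cases "p dvd n")
  case True
  then obtain j where "n = p * j" by auto
  have "om p ^ (k * n) = 1" for k
  proof -
    have "om p ^ (k * n) = (om p ^ p) ^ (k * j)" unfolding power_mult[symmetric] \<open>n = p * j\<close>
      by (simp add: ac_simps)
    thus ?thesis using om_pow_p[OF assms] by simp
  qed
  with True show ?thesis by simp
next
  case False
  have "(\<Sum>k<p. om p ^ (k * n)) = (\<Sum>k<p. (om p ^ n) ^ k)"
    by (intro sum.cong refl) (metis power_mult mult.commute)
  also have "\<dots> = ((om p ^ n) ^ p - 1) / (om p ^ n - 1)"
    using om_pow_ne1[OF assms False] by (rule geometric_sum)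
  also have "(om p ^ n) ^ p = 1" using om_pow_p[OF assms]
    by (metis power_mult mult.commute power_one)
  finally show ?thesis using False by simp
qed

lemma ft_integral:
  assumes "set_pmf P \<subseteq> {..<p}"
  shows "ft p P k = measure_pmf.expectation P (\<lambda>x. om p ^ (k * x))"
  unfolding ft_def
  by (subst integral_measure_pmf[of "{..<p}"]) (use assms in \<open>auto simp: scaleR_conv_of_real\<close>)

lemma ft_zero: assumes "set_pmf P \<subseteq> {..<p}" shows "ft p P 0 = 1"
proof -
  have "(\<Sum>x<p. pmf P x) = 1" by (rule sum_pmf_eq_1) (use assms in auto)
  hence "complex_of_real (\<Sum>x<p. pmf P x) = 1" by simp
  thus ?thesis unfolding ft_def by (simp del: of_real_sum add: of_real_sum[symmetric])
qed

lemma set_conv_mod: "p > 0 \<Longrightarrow> set_pmf (conv_mod p A B) \<subseteq> {..<p}"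
  by (auto simp: conv_mod_def)

lemma set_mfold: "p > 0 \<Longrightarrow> set_pmf D \<subseteq> {..<p} \<Longrightarrow> set_pmf (mfold_conv p M D) \<subseteq> {..<p}"
  by (induction p M D rule: mfold_conv.induct) (auto simp: set_conv_mod)

lemma ft_conv:
  assumes "p > 0" "set_pmf A \<subseteq> {..<p}" "set_pmf B \<subseteq> {..<p}"
  shows "ft p (conv_mod p A B) k = ft p A k * ft p B k"
proof -
  have e: "om p ^ (k * ((a + b) mod p)) = om p ^ (k * a) * om p ^ (k * b)" for a b
  proof -
    have "om p ^ (k * ((a + b) mod p)) = om p ^ (k * ((a + b) mod p) mod p)" by (rule om_pow_mod[OF assms(1)])
    also have "k * ((a + b) mod p) mod p = (k * (a + b)) mod p" by (simp add: mod_mult_right_eq)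
    also have "om p ^ \<dots> = om p ^ (k * (a + b))" by (rule om_pow_mod[OF assms(1), symmetric])
    finally show ?thesis by (simp add: distrib_left power_add)
  qed
  have "ft p (conv_mod p A B) k = measure_pmf.expectation (pair_pmf A B) (\<lambda>ab. om p ^ (k * ((fst ab + snd ab) mod p)))"
    using set_conv_mod[OF assms(1)] by (simp add: ft_integral conv_mod_def case_prod_beta)
  also have "\<dots> = (\<Sum>ab\<in>{..<p} \<times> {..<p}. pmf (pair_pmf A B) ab *\<^sub>R om p ^ (k * ((fst ab + snd ab) mod p)))"
    by (rule integral_measure_pmf) (use assms in auto)
  also have "\<dots> = (\<Sum>ab\<in>{..<p} \<times> {..<p}. (complex_of_real (pmf A (fst ab)) * om p ^ (k * fst ab)) * (complex_of_real (pmf B (snd ab)) * om p ^ (k * snd ab)))"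
    by (intro sum.cong refl) (auto simp: pmf_pair e scaleR_conv_of_real algebra_simps)
  also have "\<dots> = (\<Sum>a<p. \<Sum>b<p. (complex_of_real (pmf A a) * om p ^ (k * a)) * (complex_of_real (pmf B b) * om p ^ (k * b)))"
    by (simp add: sum.cartesian_product case_prod_beta)
  also have "\<dots> = ft p A k * ft p B k" by (simp add: ft_def sum_product)
  finally show ?thesis .
qed

lemma ft_mfold:
  assumes "p > 0" "set_pmf D \<subseteq> {..<p}"
  shows "ft p (mfold_conv p (Suc m) D) k = ft p D k ^ Suc m"
proof (induction m)
  case 0 then show ?case by simp
next
  case (Suc m)
  have "ft p (mfold_conv p (Suc (Suc m)) D) k = ft p D k * ft p (mfold_conv p (Suc m) D) k"
    using ft_conv[OF assms(1) assms(2) set_mfold[OF assms]] by simp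
  with Suc show ?case by simp
qed

lemma ft_inv:
  assumes "p > 0" "set_pmf P \<subseteq> {..<p}" "x < p"
  shows "(\<Sum>k<p. ft p P k * om p ^ (k * (p - x))) = of_nat p * complex_of_real (pmf P x)"
proof -
  have "(\<Sum>k<p. ft p P k * om p ^ (k * (p - x))) =
        (\<Sum>y<p. complex_of_real (pmf P y) * (\<Sum>k<p. om p ^ (k * (y + (p - x)))))"
    unfolding ft_def sum_distrib_right sum_distrib_left
    by (subst sum.swap) (simp add: algebra_simps power_add distrib_left)
  also have "\<dots> = (\<Sum>y<p. if y = x then complex_of_real (pmf P y) * of_nat p else 0)"
  proof (rule sum.cong[OF refl])
    fix y assume "y \<in> {..<p}"
    hence "p dvd (y + (p - x)) \<longleftrightarrow> y = x"
    proof -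
      have "y < p" using \<open>y \<in> _\<close> by simp
      show ?thesis
      proof
        assume d: "p dvd (y + (p - x))"
        show "y = x"
        proof (rule ccontr)
          assume "y \<noteq> x"
          hence "0 < y + (p - x)" "y + (p - x) < 2 * p" "y + (p - x) \<noteq> p" using \<open>y < p\<close> assms(3) by auto
          with d obtain j where j: "y + (p - x) = p * j" by (auto)
          with \<open>0 < y + (p - x)\<close> have "j \<ge> 1" by (cases j) auto
          moreover from j \<open>y + (p - x) < 2 * p\<close> have "j < 2" by simp
          ultimately have "j = 1" by simp
          with j \<open>y + (p - x) \<noteq> p\<close> show False by simp
        qed
      next
        assume "y = x" thus "p dvd (y + (p - x))" using assms(3) by simp
      qed
    qed
    thus "complex_of_real (pmf P y) * (\<Sum>k<p. om p ^ (k * (y + (p - x)))) =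
          (if y = x then complex_of_real (pmf P y) * of_nat p else 0)"
      by (simp add: geo_om[OF assms(1)])
  qed
  also have "\<dots> = of_nat p * complex_of_real (pmf P x)" using assms(3) by (simp add: sum.delta)
  finally show ?thesis .
qed

lemma cos_gap_int:
  assumes "p > 0" "1 \<le> r" "r \<le> int p - 1"
  shows "cos (2 * pi * real_of_int r / real p) \<le> cos (2 * pi / real p)"
proof (cases "2 * r \<le> int p")
  case True
  have "real_of_int (2 * r) \<le> real p" using True by linarith
  hence "2 * real_of_int r \<le> real p" by simp
  hence le: "2 * pi * real_of_int r / real p \<le> pi" using assms(1) by (simp add: field_simps)
  have "1 \<le> real_of_int r" using assms(2) by simp
  hence "2 * pi / real p \<le> 2 * pi * real_of_int r / real p" using assms(1)
    by (simp add: divide_right_mono)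
  thus ?thesis using le by (intro cos_monotone_0_pi_le) auto
next
  case False
  define r' where "r' = int p - r"
  have r': "1 \<le> r'" "2 * r' \<le> int p" using False assms by (auto simp: r'_def)
  have "cos (2 * pi * real_of_int r / real p) = cos (2 * pi - 2 * pi * real_of_int r' / real p)"
    using assms(1) by (simp add: r'_def field_simps)
  also have "\<dots> = cos (2 * pi * real_of_int r' / real p)" by (simp add: cos_diff)
  also have "\<dots> \<le> cos (2 * pi / real p)"
  proof -
    have "real_of_int (2 * r') \<le> real p" using r' by linarith
    hence "2 * real_of_int r' \<le> real p" by simp
    hence le: "2 * pi * real_of_int r' / real p \<le> pi" using assms(1) by (simp add: field_simps)
    have "1 \<le> real_of_int r'" using r' by simp
    hence "2 * pi / real p \<le> 2 * pi * real_of_int r' / real p" using assms(1)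
      by (simp add: divide_right_mono)
    thus ?thesis using le by (intro cos_monotone_0_pi_le) auto
  qed
  finally show ?thesis .
qed

lemma cos_gap:
  assumes "p > 0" "\<not> int p dvd t"
  shows "cos (2 * pi * real_of_int t / real p) \<le> cos (2 * pi / real p)"
proof -
  define q where "q = t div int p"
  define r where "r = t mod int p"
  have t: "t = int p * q + r" by (simp add: q_def r_def)
  have r: "1 \<le> r" "r \<le> int p - 1"
  proof -
    have "0 \<le> r" "r < int p" using assms(1) by (auto simp: r_def)
    moreover have "r \<noteq> 0" using assms(2) by (auto simp: r_def dvd_eq_mod_eq_0)
    ultimately show "1 \<le> r" "r \<le> int p - 1" by auto
  qed
  have "2 * pi * real_of_int t / real p = 2 * pi * real_of_int r / real p + (2 * pi) * real_of_int q"
    using assms(1) by (simp add: t field_simps)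
  hence "cos (2 * pi * real_of_int t / real p) = cos (2 * pi * real_of_int r / real p)"
    by (simp add: cos_add)
  also have "\<dots> \<le> cos (2 * pi / real p)" by (rule cos_gap_int[OF assms(1) r])
  finally show ?thesis .
qed

lemma norm_ft_sq:
  fixes D :: "nat pmf" and p k :: nat
  defines "a \<equiv> (\<lambda>x. 2 * pi * real (k * x) / real p)"
  shows "(cmod (ft p D k))^2 = (\<Sum>x<p. \<Sum>y<p. pmf D x * pmf D y * cos (a x - a y))"
proof -
  have ftc: "ft p D k = (\<Sum>x<p. complex_of_real (pmf D x) * cis (a x))"
    unfolding ft_def a_def om_pow by simp
  have "(cmod (ft p D k))^2 = (\<Sum>x<p. pmf D x * cos (a x))^2 + (\<Sum>x<p. pmf D x * sin (a x))^2"
    unfolding cmod_power2 ftc by simp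
  also have "\<dots> = (\<Sum>x<p. \<Sum>y<p. pmf D x * pmf D y * (cos (a x) * cos (a y) + sin (a x) * sin (a y)))"
    unfolding power2_eq_square sum_product by (simp add: sum.distrib[symmetric] algebra_simps)
  also have "\<dots> = (\<Sum>x<p. \<Sum>y<p. pmf D x * pmf D y * cos (a x - a y))"
    by (simp add: cos_diff)
  finally show ?thesis .
qed

lemma ft_bound:
  fixes D :: "nat pmf" and p k :: nat and c :: real
  assumes "prime p" "p \<ge> 3" "set_pmf D \<subseteq> {..<p}" "\<forall>x<p. pmf D x \<le> 1 - c" "c > 0"
    "0 < k" "k < p"
  shows "(cmod (ft p D k))^2 \<le> exp (-2 * c * (pi / real p)^2)"
proof -
  define d where "d = pmf D"
  define a where "a = (\<lambda>x. 2 * pi * real (k * x) / real p)"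
  define s2 where "s2 = 2 * sin (pi / real p) ^ 2"
  have p0: "p > 0" using assms by simp
  have d0: "\<And>x. d x \<ge> 0" by (simp add: d_def)
  have sum1: "(\<Sum>x<p. d x) = 1" unfolding d_def by (rule sum_pmf_eq_1) (use assms in auto)
  have cs: "cos (2 * pi / real p) = 1 - s2"
    using cos_double_sin[of "pi / real p"] by (simp add: s2_def)
  have pair: "d x * d y * cos (a x - a y) \<le> d x * d y * (if x = y then 1 else 1 - s2)"
    if "x < p" "y < p" for x y
  proof (cases "x = y")
    case True then show ?thesis by simp
  next
    case False
    have ndvd: "\<not> int p dvd (int k * (int x - int y))"
    proof
      assume "int p dvd (int k * (int x - int y))"
      moreover have "prime (int p)" using assms(1) by simp
      ultimately have "int p dvd int k \<or> int p dvd (int x - int y)" by (simp add: prime_dvd_mult_iff)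
      moreover have "\<not> int p dvd int k" using assms(6,7) by (auto dest: zdvd_imp_le)
      moreover have "\<not> int p dvd (int x - int y)"
      proof
        assume "int p dvd (int x - int y)"
        then obtain j where j: "int x - int y = int p * j" by auto
        have "j \<noteq> 0" using j False by auto
        hence "\<bar>j\<bar> \<ge> 1" by simp
        hence "int p * 1 \<le> int p * \<bar>j\<bar>" by (intro mult_left_mono) auto
        hence "\<bar>int p * j\<bar> \<ge> int p" by (simp add: abs_mult)
        moreover have "\<bar>int x - int y\<bar> < int p" using that by auto
        ultimately show False using j by simp
      qed
      ultimately show False by blast
    qed
    have "a x - a y = 2 * pi * real_of_int (int k * (int x - int y)) / real p"
      using p0 by (simp add: a_def diff_divide_distrib[symmetric] algebra_simps)
    hence "cos (a x - a y) \<le> 1 - s2" using cos_gap[OF p0 ndvd] cs by simp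
    thus ?thesis using False d0 by (simp add: mult_left_mono)
  qed
  have "(cmod (ft p D k))^2 = (\<Sum>x<p. \<Sum>y<p. d x * d y * cos (a x - a y))"
    unfolding d_def a_def by (rule norm_ft_sq)
  also have "\<dots> \<le> (\<Sum>x<p. \<Sum>y<p. d x * d y * (if x = y then 1 else 1 - s2))"
    by (intro sum_mono pair) auto
  also have "\<dots> = (\<Sum>x<p. \<Sum>y<p. d x * d y) - s2 * (\<Sum>x<p. \<Sum>y<p. if x = y then 0 else d x * d y)"
  proof -
    have "(\<Sum>x<p. \<Sum>y<p. d x * d y * (if x = y then 1 else 1 - s2)) =
          (\<Sum>x<p. \<Sum>y<p. d x * d y - s2 * (if x = y then 0 else d x * d y))"
      by (intro sum.cong refl) (auto simp: algebra_simps)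
    also have "\<dots> = (\<Sum>x<p. \<Sum>y<p. d x * d y) - s2 * (\<Sum>x<p. \<Sum>y<p. if x = y then 0 else d x * d y)"
      by (simp add: sum_subtractf sum_distrib_left)
    finally show ?thesis .
  qed
  also have "(\<Sum>x<p. \<Sum>y<p. d x * d y) = 1" using sum1 by (simp add: sum_product[symmetric])
  also have "(\<Sum>x<p. \<Sum>y<p. if x = y then 0 else d x * d y) = 1 - (\<Sum>x<p. d x ^ 2)"
  proof -
    have "(\<Sum>x<p. \<Sum>y<p. if x = y then 0 else d x * d y) = (\<Sum>x<p. \<Sum>y<p. d x * d y - (if x = y then d x * d y else 0))"
      by (intro sum.cong refl) auto
    also have "\<dots> = (\<Sum>x<p. \<Sum>y<p. d x * d y) - (\<Sum>x<p. d x ^ 2)"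
      by (simp add: sum_subtractf power2_eq_square)
    finally show ?thesis using sum1 by (simp add: sum_product[symmetric])
  qed
  finally have bnd: "(cmod (ft p D k))^2 \<le> 1 - s2 * (1 - (\<Sum>x<p. d x ^ 2))" .
  define m where "m = Max (d ` {..<p})"
  have "m \<in> d ` {..<p}" unfolding m_def using p0 by (intro Max_in) auto
  then obtain x0 where x0: "x0 < p" "d x0 = m" by auto
  have mge: "d x \<le> m" if "x < p" for x unfolding m_def using that by (intro Max_ge) auto
  have m0: "0 \<le> m" using d0 x0 by metis
  have m1: "m \<le> 1 - c" using assms(4) x0 by (auto simp: d_def)
  have Q1: "(\<Sum>x<p. d x ^ 2) \<le> m"
  proof -
    have "(\<Sum>x<p. d x ^ 2) \<le> (\<Sum>x<p. d x * m)"
      by (intro sum_mono) (use mge d0 in \<open>auto simp: power2_eq_square intro: mult_left_mono\<close>)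
    also have "\<dots> = m" using sum1 by (simp add: sum_distrib_right[symmetric])
    finally show ?thesis .
  qed
  have Q2: "(\<Sum>x<p. d x ^ 2) \<le> m^2 + (1 - m)^2"
  proof -
    define R where "R = {..<p} - {x0}"
    have sR: "(\<Sum>x\<in>R. d x) = 1 - m" using sum1 x0 unfolding R_def
      by (subst (asm) sum.remove[of _ x0]) auto
    have "(\<Sum>x<p. d x ^ 2) = d x0 ^ 2 + (\<Sum>x\<in>R. d x ^ 2)"
      unfolding R_def using x0 by (subst sum.remove[of _ x0]) auto
    also have "(\<Sum>x\<in>R. d x ^ 2) \<le> (\<Sum>x\<in>R. d x * (1 - m))"
    proof (intro sum_mono)
      fix x assume "x \<in> R"
      have "d x \<le> (\<Sum>x\<in>R. d x)" using \<open>x \<in> R\<close> d0 unfolding R_def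
        by (intro member_le_sum) auto
      thus "d x ^ 2 \<le> d x * (1 - m)" using sR d0[of x] by (simp add: power2_eq_square mult_left_mono)
    qed
    also have "\<dots> = (1 - m)^2" using sR by (simp add: sum_distrib_right[symmetric] power2_eq_square)
    finally show ?thesis using x0 by simp
  qed
  define P where "P = 1 - (\<Sum>x<p. d x ^ 2)"
  have P1: "P \<ge> 1 - m" using Q1 by (simp add: P_def)
  have P2: "P \<ge> 2 * m * (1 - m)" using Q2 by (simp add: P_def power2_eq_square algebra_simps)
  have u: "0 < pi / real p" "(pi / real p)^2 \<le> 11/10"
  proof -
    show "0 < pi / real p" using p0 by simp
    have "pi / real p \<le> pi / 3" using assms(2) by (intro divide_left_mono) auto
    moreover have "pi / 3 \<le> 1048/1000" using pi_approx by simp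
    ultimately have "pi / real p \<le> 1048/1000" by linarith
    hence "(pi / real p)^2 \<le> (1048/1000)^2" using p0 by (intro power_mono) auto
    moreover have "(1048/1000::real)^2 \<le> 11/10" by (simp add: power2_eq_square)
    ultimately show "(pi / real p)^2 \<le> 11/10" by linarith
  qed
  have "1 - 2 * sin (pi / real p) ^ 2 * P \<le> exp (-2 * c * (pi / real p)^2)"
    by (rule key_ineq[OF u assms(5) m0 m1 P1 P2])
  with bnd show ?thesis by (simp add: P_def s2_def)
qed

theorem lemma3p3:
  fixes p M :: nat and c :: real and D :: "nat pmf"
  assumes "prime p" and "p \<ge> 3" and "c > 0"
    and "set_pmf D \<subseteq> {..<p}"
    and "\<forall>x<p. pmf D x \<le> 1 - c"
    and "M \<ge> 1"
    and "real M \<ge> 2 * real p ^ 2 * ln (real p) / (c * pi ^ 2)"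
  shows "\<forall>x<p. \<bar>pmf (mfold_conv p M D) x - 1 / real p\<bar> \<le> 1 / real p ^ 2"
proof (intro allI impI)
  fix x assume x: "x < p"
  have p0: "p > 0" using assms(2) by simp
  have rp: "real p > 0" using p0 by simp
  obtain m' where M: "M = Suc m'" using assms(6) by (cases M) auto
  define f where "f = mfold_conv p M D"
  have sf: "set_pmf f \<subseteq> {..<p}" unfolding f_def by (rule set_mfold[OF p0 assms(4)])
  have ftf: "ft p f k = ft p D k ^ M" for k unfolding f_def M by (rule ft_mfold[OF p0 assms(4)])
  have Mc: "real M * c * (pi / real p)^2 \<ge> 2 * ln (real p)"
  proof -
    have "2 * real p ^ 2 * ln (real p) \<le> real M * (c * pi ^ 2)"
      using assms(7) assms(3) by (simp add: divide_le_eq)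
    hence "2 * ln (real p) * real p ^ 2 \<le> (real M * c * pi ^ 2)" by (simp add: algebra_simps)
    hence "2 * ln (real p) \<le> (real M * c * pi ^ 2) / real p ^ 2" using rp by (simp add: le_divide_eq)
    thus ?thesis by (simp add: power_divide)
  qed
  have Fk: "cmod (ft p D k) ^ M \<le> 1 / real p ^ 2" if "0 < k" "k < p" for k
  proof -
    have sq: "(cmod (ft p D k))^2 \<le> (exp (- c * (pi / real p)^2))^2"
    proof -
      have "(exp (- c * (pi / real p)^2))^2 = exp (- c * (pi / real p)^2 + - c * (pi / real p)^2)"
        unfolding power2_eq_square[of "exp _"] exp_add ..
      also have "- c * (pi / real p)^2 + - c * (pi / real p)^2 = -2 * c * (pi / real p)^2" by simp
      finally show ?thesis using ft_bound[OF assms(1,2,4,5,3) that] by simp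
    qed
    hence le: "cmod (ft p D k) \<le> exp (- c * (pi / real p)^2)"
      by (rule power2_le_imp_le) simp
    have "cmod (ft p D k) ^ M \<le> exp (- c * (pi / real p)^2) ^ M"
      using le by (intro power_mono) auto
    also have "\<dots> = exp (- (real M * c * (pi / real p)^2))"
      by (simp add: exp_of_nat_mult[symmetric])
    also have "\<dots> \<le> exp (- (2 * ln (real p)))" using Mc by simp
    also have "\<dots> = 1 / real p ^ 2"
    proof -
      have "exp (2 * ln (real p)) = real p ^ 2"
        using exp_of_nat_mult[of 2 "ln (real p)"] rp by simp
      thus ?thesis by (simp add: exp_minus field_simps)
    qed
    finally show ?thesis .
  qed
  have "of_nat p * complex_of_real (pmf f x) = (\<Sum>k<p. ft p f k * om p ^ (k * (p - x)))"
    by (rule ft_inv[OF p0 sf x, symmetric])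
  also have "\<dots> = (\<Sum>k\<in>{0..<p}. ft p D k ^ M * om p ^ (k * (p - x)))"
    by (simp add: ftf atLeast0LessThan)
  also have "\<dots> = 1 + (\<Sum>k\<in>{1..<p}. ft p D k ^ M * om p ^ (k * (p - x)))"
    using p0 by (simp add: sum.atLeast_Suc_lessThan ft_zero[OF assms(4)])
  finally have eq: "complex_of_real (real p * pmf f x - 1) = (\<Sum>k\<in>{1..<p}. ft p D k ^ M * om p ^ (k * (p - x)))"
    by (simp add: algebra_simps)
  have "\<bar>real p * pmf f x - 1\<bar> = cmod (\<Sum>k\<in>{1..<p}. ft p D k ^ M * om p ^ (k * (p - x)))"
    by (metis eq norm_of_real)
  also have "\<dots> \<le> (\<Sum>k\<in>{1..<p}. cmod (ft p D k ^ M * om p ^ (k * (p - x))))"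
    by (rule norm_sum)
  also have "\<dots> = (\<Sum>k\<in>{1..<p}. cmod (ft p D k) ^ M)"
    by (simp add: norm_mult norm_power del: norm_power_int)
  also have "\<dots> \<le> of_nat (card {1..<p}) * (1 / real p ^ 2)"
    by (rule sum_bounded_above) (use Fk in auto)
  also have "\<dots> = (real p - 1) / real p ^ 2" using p0 by (simp add: of_nat_diff)
  finally have b: "\<bar>real p * pmf f x - 1\<bar> \<le> (real p - 1) / real p ^ 2" .
  have "\<bar>pmf f x - 1 / real p\<bar> = \<bar>real p * pmf f x - 1\<bar> / real p"
  proof -
    have "pmf f x - 1 / real p = (real p * pmf f x - 1) / real p" using rp by (simp add: field_simps)
    thus ?thesis using rp by simp
  qed
  also have "\<dots> \<le> ((real p - 1) / real p ^ 2) / real p" using b rp by (intro divide_right_mono) auto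
  also have "\<dots> \<le> 1 / real p ^ 2"
  proof -
    have "(real p - 1) / real p \<le> 1" using rp by simp
    hence "((real p - 1) / real p) / real p ^ 2 \<le> 1 / real p ^ 2" using rp by (intro divide_right_mono) auto
    thus ?thesis by (simp add: field_simps)
  qed
  finally show "\<bar>pmf (mfold_conv p M D) x - 1 / real p\<bar> \<le> 1 / real p ^ 2" by (simp add: f_def)
qed

end
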